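(* Let $1<\alpha<2$, $b>0$, $M\ge2$ an integer, $h=b/M$. Let $g_k^\alpha=(-1)^k\binom{\alpha}{k}$, $w_0^\alpha=\frac{\alpha}{2}g_0^\alpha$, $w_k^\alpha=\frac{\alpha}{2}g_k^\alpha+\frac{2-\alpha}{2}g_{k-1}^\alpha$ for $k\ge1$. Let $B_\alpha$ be the $(M-1)\times(M-1)$ matrix with entries $(B_\alpha)_{ij}=w^\alpha_{j-i+1}$ if $j\ge i-1$ and $(B_\alpha)_{ij}=0$ if $j<i-1$, and $A_\alpha=B_\alpha+B_\alpha^T$. For $u,v\in\mathbb{C}^{M-1}$ let $(u,v)=h\sum_{i=1}^{M-1}u_i\overline{v_i}$ and $\|u\|=(u,u)^{1/2}$. Then for every $u\in\mathbb{C}^{M-1}$, $$-\frac{1}{h^\alpha}(A_\alpha u,u)\ge-\frac{2}{b^\alpha\Gamma(1-\alpha)}\|u\|^2,$$ and the right-hand side is $>0$ for $u\neq0$. *)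

theory Defs
  imports "HOL-Analysis.Analysis"
begin

definition gcoef :: "real \<Rightarrow> nat \<Rightarrow> real" where
  "gcoef \<alpha> k = (-1) ^ k * (\<alpha> gchoose k)"

fun wcoef :: "real \<Rightarrow> nat \<Rightarrow> real" where
  "wcoef \<alpha> 0 = \<alpha> / 2 * gcoef \<alpha> 0"
| "wcoef \<alpha> (Suc k) = \<alpha> / 2 * gcoef \<alpha> (Suc k) + (2 - \<alpha>) / 2 * gcoef \<alpha> k"

definition Bmat :: "real \<Rightarrow> nat \<Rightarrow> nat \<Rightarrow> real" where
  "Bmat \<alpha> i j = (if j + 1 \<ge> i then wcoef \<alpha> (j + 1 - i) else 0)"

definition Amat :: "real \<Rightarrow> nat \<Rightarrow> nat \<Rightarrow> real" where
  "Amat \<alpha> i j = Bmat \<alpha> i j + Bmat \<alpha> j i"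

definition matvec :: "nat \<Rightarrow> (nat \<Rightarrow> nat \<Rightarrow> real) \<Rightarrow> (nat \<Rightarrow> complex) \<Rightarrow> nat \<Rightarrow> complex" where
  "matvec M C u = (\<lambda>i. \<Sum>j=1..M-1. complex_of_real (C i j) * u j)"

definition ip_h :: "real \<Rightarrow> nat \<Rightarrow> (nat \<Rightarrow> complex) \<Rightarrow> (nat \<Rightarrow> complex) \<Rightarrow> complex" where
  "ip_h h M u v = complex_of_real h * (\<Sum>i=1..M-1. u i * cnj (v i))"

definition norm_h :: "real \<Rightarrow> nat \<Rightarrow> (nat \<Rightarrow> complex) \<Rightarrow> real" where
  "norm_h h M u = sqrt (Re (ip_h h M u u))"

end

theory Submission
  imports Defs
begin
definition Pn :: "real \<Rightarrow> nat \<Rightarrow> real" where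
  "Pn \<alpha> n = pochhammer (1 - \<alpha>) n / fact n"

lemma gcoef_poch: "gcoef \<alpha> k = pochhammer (-\<alpha>) k / fact k"
  by (simp add: gcoef_def gbinomial_pochhammer power_mult_distrib[symmetric])

lemma Pn_Suc: "Pn \<alpha> (Suc n) = Pn \<alpha> n * (real n + 1 - \<alpha>) / (real n + 1)"
  by (simp add: Pn_def pochhammer_Suc field_simps)

lemma poch_Suc': "pochhammer (-(\<alpha>::real)) (Suc n) = - \<alpha> * pochhammer (1 - \<alpha>) n"
proof -
  have "-\<alpha> + 1 = 1 - \<alpha>" by simp
  then show ?thesis by (simp only: pochhammer_rec)
qed

lemma sum_g: "(\<Sum>k\<le>n. gcoef \<alpha> k) = Pn \<alpha> n"
proof (induction n)
  case 0 then show ?case by (simp add: gcoef_def Pn_def)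
next
  case (Suc n)
  have g: "gcoef \<alpha> (Suc n) = - \<alpha> * Pn \<alpha> n / (real n + 1)"
    by (simp add: gcoef_poch poch_Suc' Pn_def algebra_simps)
  have "Pn \<alpha> (Suc n) = Pn \<alpha> n + gcoef \<alpha> (Suc n)"
  proof -
    have F: "real n + 1 \<noteq> 0" by auto
    show ?thesis unfolding g Pn_Suc using F
      by (simp add: field_simps)
  qed
  then show ?case using Suc by (simp only: sum.atMost_Suc)
qed

lemma sum_w: "(\<Sum>k\<le>Suc m. wcoef \<alpha> k) = \<alpha>/2 * Pn \<alpha> (Suc m) + (2-\<alpha>)/2 * Pn \<alpha> m"
proof (induction m)
  case 0
  have "Pn \<alpha> 1 = gcoef \<alpha> 0 + gcoef \<alpha> 1" "Pn \<alpha> 0 = gcoef \<alpha> 0"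
    using sum_g[of \<alpha> 1] sum_g[of \<alpha> 0] by simp_all
  then show ?case by (simp add: algebra_simps)
next
  case (Suc m)
  have "Pn \<alpha> (Suc (Suc m)) = Pn \<alpha> (Suc m) + gcoef \<alpha> (Suc (Suc m))"
    by (simp only: sum_g[symmetric] sum.atMost_Suc)
  moreover have "Pn \<alpha> (Suc m) = Pn \<alpha> m + gcoef \<alpha> (Suc m)"
    by (simp only: sum_g[symmetric] sum.atMost_Suc)
  ultimately show ?case using Suc by (simp add: field_simps)
qed

lemma Pn_neg: assumes "1 < \<alpha>" "\<alpha> < 2" "1 \<le> m" shows "Pn \<alpha> m < 0"
  using assms(3)
proof (induction m rule: dec_induct)
  case base then show ?case using assms by (simp add: Pn_def)
next
  case (step m) then show ?case using assms by (simp add: Pn_Suc mult_neg_pos divide_neg_pos)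
qed

lemma Pn_dec: assumes "1 < \<alpha>" "\<alpha> < 2" "1 \<le> m" shows "- Pn \<alpha> (Suc m) \<le> - Pn \<alpha> m"
proof -
  have "Pn \<alpha> m < 0" using Pn_neg assms by blast
  moreover have "(real m + 1 - \<alpha>) / (real m + 1) \<le> 1" "0 \<le> (real m + 1 - \<alpha>) / (real m + 1)"
    using assms by auto
  ultimately have "Pn \<alpha> m * 1 \<le> Pn \<alpha> m * ((real m + 1 - \<alpha>) / (real m + 1))"
    by (intro mult_left_mono_neg) auto
  then show ?thesis by (simp add: Pn_Suc)
qed

lemma Sw_ge: assumes "1 < \<alpha>" "\<alpha> < 2" "1 \<le> m"
  shows "- (\<Sum>k\<le>Suc m. wcoef \<alpha> k) \<ge> - Pn \<alpha> (Suc m)"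
proof -
  have "(2-\<alpha>)/2 * (- Pn \<alpha> (Suc m)) \<le> (2-\<alpha>)/2 * (- Pn \<alpha> m)"
    using Pn_dec[OF assms] assms by (intro mult_left_mono) auto
  then show ?thesis unfolding sum_w by (simp add: field_simps)
qed

lemma gcoef_pos: assumes "1 < \<alpha>" "\<alpha> < 2" "2 \<le> k" shows "gcoef \<alpha> k > 0"
proof -
  obtain j where k: "k = Suc (Suc j)" using assms(3) by (metis add_2_eq_Suc le_Suc_ex)
  have "pochhammer (-\<alpha>) k = (\<alpha> * (\<alpha> - 1)) * pochhammer (2 - \<alpha>) j"
    by (simp add: k pochhammer_rec algebra_simps)
  moreover have "pochhammer (2 - \<alpha>) j > 0" using assms by (intro pochhammer_pos) auto
  moreover have "\<alpha> * (\<alpha> - 1) > 0" using assms by simp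
  ultimately have "pochhammer (-\<alpha>) k > 0" by simp
  then show ?thesis by (simp add: gcoef_poch)
qed

lemma wcoef_nonneg: assumes "1 < \<alpha>" "\<alpha> < 2" "3 \<le> k" shows "wcoef \<alpha> k \<ge> 0"
proof -
  obtain j where k: "k = Suc j" "2 \<le> j" using assms(3) by (cases k) auto
  show ?thesis using gcoef_pos[OF assms(1,2), of j] gcoef_pos[OF assms(1,2), of "Suc j"] assms k
    by simp
qed

lemma w0: "wcoef \<alpha> 0 = \<alpha>/2" by (simp add: gcoef_def)
lemma g0: "gcoef \<alpha> 0 = 1" by (simp add: gcoef_def)
lemma w1: "wcoef \<alpha> 1 = (2 - \<alpha> - \<alpha>^2)/2"
  by (simp add: gcoef_def power2_eq_square field_simps)
lemma w2: "wcoef \<alpha> 2 = \<alpha>/2 * (\<alpha> * (\<alpha> - 1) / 2) - (2 - \<alpha>) / 2 * \<alpha>"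
  by (simp add: gcoef_def numeral_2_eq_2 gbinomial_Suc field_simps)

lemma w02: assumes "1 < \<alpha>" "\<alpha> < 2" shows "wcoef \<alpha> 0 + wcoef \<alpha> 2 \<ge> 0"
proof -
  have e: "wcoef \<alpha> 0 + wcoef \<alpha> 2 = \<alpha> * (\<alpha> - 1) * (\<alpha> + 2) / 4"
    by (simp add: w0 w2 field_simps gcoef_def)
  have "\<alpha> * (\<alpha> - 1) * (\<alpha> + 2) / 4 \<ge> 0" using assms
    by (intro divide_nonneg_pos mult_nonneg_nonneg) auto
  then show ?thesis using e by linarith
qed

lemma not_nonpos_int: assumes "-1 < (z::real)" "z < 0" shows "z \<notin> \<int>\<^sub>\<le>\<^sub>0"
proof
  assume "z \<in> \<int>\<^sub>\<le>\<^sub>0"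
  then obtain n where "z = of_int n" "n \<le> 0" by (auto elim: nonpos_Ints_cases)
  with assms show False by auto
qed

lemma Gamma_neg: assumes "1 < (\<alpha>::real)" "\<alpha> < 2" shows "Gamma (1 - \<alpha>) < 0"
proof -
  have nz: "1 - \<alpha> \<notin> \<int>\<^sub>\<le>\<^sub>0" using assms by (intro not_nonpos_int) auto
  have "Gamma (1 - \<alpha> + 1) = (1 - \<alpha>) * Gamma (1 - \<alpha>)" by (rule Gamma_plus1[OF nz])
  moreover have "Gamma (1 - \<alpha> + 1) > 0" using assms by (intro Gamma_real_pos) auto
  ultimately show ?thesis using assms by (simp add: zero_less_mult_iff)
qed

lemma ratio_le: assumes "1 < \<alpha>" "\<alpha> < 2" "(y::real) \<ge> 2"
  shows "(y - \<alpha>) * (y + 1) powr \<alpha> \<le> y * y powr \<alpha>"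
proof -
  define x where "x = 1 / y"
  have y0: "y > 0" using assms by auto
  have x0: "x > 0" "\<alpha> * x < 1" using assms y0 by (auto simp: x_def field_simps)
  have yx: "y + 1 = y * (1 + x)" using y0 by (simp add: x_def field_simps)
  have e1: "(y + 1) powr \<alpha> = y powr \<alpha> * (1 + x) powr \<alpha>"
    unfolding yx using y0 x0 by (auto intro: powr_mult)
  have "(1 + x) powr \<alpha> = exp (\<alpha> * ln (1 + x))" using x0 by (simp add: powr_def)
  also have "\<dots> \<le> exp (\<alpha> * x)" using x0 assms
    by (intro exp_le_cancel_iff[THEN iffD2] mult_left_mono ln_add_one_self_le_self) auto
  finally have p1: "(1 + x) powr \<alpha> \<le> exp (\<alpha> * x)" .
  have p2: "1 - \<alpha> * x \<le> exp (- (\<alpha> * x))" using exp_ge_add_one_self[of "- (\<alpha> * x)"] by simp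
  have "(1 - \<alpha> * x) * (1 + x) powr \<alpha> \<le> exp (- (\<alpha> * x)) * (1 + x) powr \<alpha>"
    using p2 by (intro mult_right_mono) auto
  also have "\<dots> \<le> exp (- (\<alpha> * x)) * exp (\<alpha> * x)" using p1 by (intro mult_left_mono) auto
  also have "\<dots> = 1" by (simp add: exp_minus field_simps)
  finally have k: "(1 - \<alpha> * x) * (1 + x) powr \<alpha> \<le> 1" .
  have "(y - \<alpha>) * (y + 1) powr \<alpha> = y * y powr \<alpha> * ((1 - \<alpha> * x) * (1 + x) powr \<alpha>)"
    unfolding e1 using y0 by (simp add: x_def field_simps)
  also have "\<dots> \<le> y * y powr \<alpha> * 1" using k y0 by (intro mult_left_mono) auto
  finally show ?thesis by simp
qed

lemma q_bound:
  assumes "1 < \<alpha>" "\<alpha> < 2" "1 \<le> n" "n + 1 \<le> M"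
  shows "-(pochhammer (1-\<alpha>) n / fact n) \<ge> (- 1 / Gamma (1 - \<alpha>)) * real M powr (-\<alpha>)"
proof -
  define z where "z = 1 - \<alpha>"
  define q where "q n = -(pochhammer z n / fact n)" for n
  define a where "a n = q n * (real n + 1) powr \<alpha>" for n
  define L where "L = - rGamma z"
  have nz: "z \<notin> \<int>\<^sub>\<le>\<^sub>0" using assms by (intro not_nonpos_int) (auto simp: z_def)
  have q_rec: "q (Suc n) = q n * (real n + 1 - \<alpha>) / (real n + 1)" for n
    by (simp add: q_def pochhammer_Suc z_def field_simps)
  have q_pos: "q n > 0" if "n \<ge> 1" for n
    using that
  proof (induction n rule: dec_induct)
    case base then show ?case using assms by (simp add: q_def z_def)
  next
    case (step m) then show ?case using assms by (simp add: q_rec)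
  qed
  have a_dec: "a (Suc n) \<le> a n" if "n \<ge> 1" for n
  proof -
    have "a (Suc n) = q n / (real n + 1) * ((real n + 1 - \<alpha>) * (real n + 1 + 1) powr \<alpha>)"
      by (simp add: a_def q_rec add.commute)
    also have "\<dots> \<le> q n / (real n + 1) * ((real n + 1) * (real n + 1) powr \<alpha>)"
      using q_pos[OF that] that assms
      by (intro mult_left_mono ratio_le) auto
    also have "\<dots> = a n" by (simp add: a_def)
    finally show ?thesis .
  qed
  have ev: "a n = - rGamma_series z n * (1/(1 + z * inverse (real n)) * (1 + inverse (real n)) powr \<alpha>)"
    if "n \<ge> 1" for n
  proof -
    have n0: "real n > 0" using that by auto
    have "exp (z * ln (real n)) = real n powr z" using n0 by (simp add: powr_def)
    also have "\<dots> = real n / real n powr \<alpha>" using n0 by (simp add: z_def powr_diff)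
    finally have e: "exp (z * ln (real n)) = real n / real n powr \<alpha>" .
    have "(1 + inverse (real n)) powr \<alpha> = (real n + 1) powr \<alpha> / real n powr \<alpha>"
      using n0 by (simp add: powr_divide[symmetric] field_simps)
    moreover have "real n + z \<noteq> 0" using n0 assms that by (simp add: z_def)
    moreover have "1 + z * inverse (real n) = (real n + z) / real n" using n0 by (simp add: field_simps)
    moreover have "(fact n::real) \<noteq> 0" by simp
    ultimately show ?thesis using n0
      by (simp add: a_def q_def rGamma_series_def e pochhammer_Suc divide_simps) (simp add: algebra_simps)
  qed
  have lim1: "(\<lambda>n. - rGamma_series z n * (1/(1 + z * inverse (real n)) * (1 + inverse (real n)) powr \<alpha>))
      \<longlonglongrightarrow> - rGamma z * (1/(1 + z * 0) * (1 + 0) powr \<alpha>)"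
    by (intro tendsto_intros lim_inverse_n) auto
  have "(\<lambda>k. a (Suc k)) \<longlonglongrightarrow> L"
  proof -
    have lim2: "(\<lambda>n. - rGamma_series z n * (1/(1 + z * inverse (real n)) * (1 + inverse (real n)) powr \<alpha>))
      \<longlonglongrightarrow> L" using lim1 by (simp add: L_def)
    have "\<forall>\<^sub>F n in sequentially. - rGamma_series z n * (1/(1 + z * inverse (real n)) * (1 + inverse (real n)) powr \<alpha>) = a n"
      unfolding eventually_sequentially by (intro exI[of _ 1] allI impI ev[symmetric])
    then have "(\<lambda>n. a n) \<longlonglongrightarrow> L" using lim2 by (rule Lim_transform_eventually[rotated])
    then show ?thesis by (rule LIMSEQ_Suc)
  qed
  moreover have "decseq (\<lambda>k. a (Suc k))" by (rule decseq_SucI) (intro a_dec, auto)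
  ultimately have "L \<le> a (Suc (n - 1))" by (rule decseq_ge[rotated])
  then have La: "L \<le> a n" using assms by simp
  have Lpos: "L > 0" using Gamma_neg[OF assms(1,2)] by (simp add: L_def Gamma_def z_def)
  have "L * real M powr (-\<alpha>) \<le> L * (real n + 1) powr (-\<alpha>)"
    using assms Lpos by (intro mult_left_mono powr_mono2') auto
  also have "\<dots> \<le> a n * (real n + 1) powr (-\<alpha>)" using La by (intro mult_right_mono) auto
  also have "\<dots> = q n" by (simp add: a_def powr_minus field_simps)
  finally show ?thesis by (simp add: q_def z_def L_def Gamma_def divide_inverse)
qed

lemma rowsum_aux:
  fixes i n :: nat assumes "2 \<le> i"
  shows "(\<Sum>j=1..n. if i \<le> j+1 then f (j+1-i) else (0::real)) = (if i \<le> n+1 then (\<Sum>k\<le>n+1-i. f k) else 0)"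
proof (induction n)
  case 0 then show ?case using assms by auto
next
  case (Suc n)
  show ?case
  proof (cases "i \<le> n + 1")
    case True
    then have e: "Suc (Suc n) - i = Suc (Suc n - i)" by auto
    show ?thesis using Suc True by (simp add: e)
  next
    case False
    then show ?thesis using Suc by (cases "i = n+2") auto
  qed
qed

lemma sum1_eq: fixes n :: nat shows "(\<Sum>j=1..n. f j) = (\<Sum>k\<le>n. f k) - (f 0::real)"
  by (induction n) auto

lemma sum1_eq': fixes n :: nat shows "sum f {Suc 0..n} = (\<Sum>k\<le>n. f k) - (f 0::real)"
  using sum1_eq[of f n] by simp

lemma colsum_aux:
  fixes i n :: nat shows "(\<Sum>j=1..n. if j \<le> i+1 then f (i+1-j) else (0::real)) = (\<Sum>k\<in>{i+1-n..i}. f k)"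
proof (induction n)
  case 0 then show ?case by auto
next
  case (Suc n)
  show ?case
  proof (cases "n \<le> i")
    case True
    then have "{i+1-Suc n..i} = insert (i-n) {i+1-n..i}" "i - n \<notin> {i+1-n..i}" by auto
    then show ?thesis using Suc True by (simp add: Suc_diff_le)
  next
    case False
    then have "i+1-Suc n = 0" "i+1-n = 0" by auto
    then show ?thesis using Suc False by simp
  qed
qed

lemma Sw_bnd:
  assumes "1 < \<alpha>" "\<alpha> < 2" "2 \<le> m" "m + 1 \<le> M"
  shows "- (\<Sum>k\<le>m. wcoef \<alpha> k) \<ge> (- 1 / Gamma (1 - \<alpha>)) * real M powr (-\<alpha>)"
proof -
  obtain m' where m: "m = Suc m'" "1 \<le> m'" using assms(3) by (cases m) auto
  have "- (\<Sum>k\<le>m. wcoef \<alpha> k) \<ge> - Pn \<alpha> m" using Sw_ge[OF assms(1,2) m(2)] m by simp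
  moreover have "- Pn \<alpha> m \<ge> (- 1 / Gamma (1 - \<alpha>)) * real M powr (-\<alpha>)"
    unfolding Pn_def using q_bound[OF assms(1,2), of m M] assms by simp
  ultimately show ?thesis by linarith
qed

lemma w1_bnd:
  assumes "1 < \<alpha>" "\<alpha> < 2" "2 \<le> M"
  shows "- wcoef \<alpha> 1 \<ge> (- 1 / Gamma (1 - \<alpha>)) * real M powr (-\<alpha>)"
proof -
  have "- Pn \<alpha> 1 \<ge> (- 1 / Gamma (1 - \<alpha>)) * real M powr (-\<alpha>)"
    unfolding Pn_def using q_bound[OF assms(1,2), of 1 M] assms by simp
  moreover have "- Pn \<alpha> 1 = \<alpha> - 1" by (simp add: Pn_def)
  moreover have "- wcoef \<alpha> 1 = (\<alpha> - 1) * (\<alpha> + 2) / 2" by (simp add: gcoef_def field_simps)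
  moreover have "(\<alpha> - 1) * (\<alpha> + 2) / 2 \<ge> \<alpha> - 1" using assms by (simp add: field_simps)
  ultimately show ?thesis by linarith
qed

lemma rowA:
  assumes "1 < \<alpha>" "\<alpha> < 2" "2 \<le> M" "1 \<le> i" "i \<le> M - 1"
  shows "- (\<Sum>j=1..M-1. Amat \<alpha> i j) \<ge> 2 * ((- 1 / Gamma (1 - \<alpha>)) * real M powr (-\<alpha>))"
proof -
  define n where "n = M - 1"
  define d where "d = (- 1 / Gamma (1 - \<alpha>)) * real M powr (-\<alpha>)"
  define Sw where "Sw m = (\<Sum>k\<le>m. wcoef \<alpha> k)" for m
  have n1: "1 \<le> n" "n + 1 = M" "i \<le> n" using assms by (auto simp: n_def)
  have Sb: "- Sw m \<ge> d" if "2 \<le> m" "m \<le> n" for m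
    using Sw_bnd[OF assms(1,2) that(1), of M] that n1 by (simp add: Sw_def d_def)
  have wb: "- wcoef \<alpha> 1 \<ge> d" using w1_bnd[OF assms(1,2,3)] by (simp add: d_def)
  have S1: "Sw 1 - wcoef \<alpha> 0 = wcoef \<alpha> 1" by (simp add: Sw_def)
  have RB: "(\<Sum>j=1..n. Bmat \<alpha> i j) = (if i = 1 then Sw n - wcoef \<alpha> 0 else Sw (n+1-i))"
  proof (cases "i = 1")
    case True
    then show ?thesis by (simp add: Bmat_def sum1_eq' Sw_def)
  next
    case False
    then have "2 \<le> i" using assms by auto
    from rowsum_aux[OF this, where n=n and f="wcoef \<alpha>"] show ?thesis using False n1
      by (simp add: Bmat_def Sw_def)
  qed
  have CB: "(\<Sum>j=1..n. Bmat \<alpha> j i) = (if i = n then Sw n - wcoef \<alpha> 0 else Sw i)"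
  proof -
    have "(\<Sum>j=1..n. Bmat \<alpha> j i) = (\<Sum>k\<in>{i+1-n..i}. wcoef \<alpha> k)"
      using colsum_aux[where n=n and i=i and f="wcoef \<alpha>"] by (simp add: Bmat_def)
    moreover have "i = n \<Longrightarrow> {i+1-n..i} = {1..n}" by auto
    moreover have "i \<noteq> n \<Longrightarrow> {i+1-n..i} = {..i}" using n1 by auto
    ultimately show ?thesis by (auto simp: Sw_def sum1_eq')
  qed
  have R: "(\<Sum>j=1..n. Amat \<alpha> i j) = (\<Sum>j=1..n. Bmat \<alpha> i j) + (\<Sum>j=1..n. Bmat \<alpha> j i)"
    by (simp add: Amat_def sum.distrib)
  have "- (\<Sum>j=1..n. Amat \<alpha> i j) \<ge> 2 * d"
  proof (cases "n = 1")
    case True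
    then have "i = 1" using n1 assms(4) by auto
    then have "(\<Sum>j=1..n. Amat \<alpha> i j) = 2 * wcoef \<alpha> 1"
      unfolding R RB CB using True S1 by (simp del: wcoef.simps)
    then show ?thesis using wb by linarith
  next
    case False
    then have n2: "2 \<le> n" using n1 by auto
    show ?thesis
    proof (cases "i = 1 \<or> i = n")
      case True
      then have "(\<Sum>j=1..n. Amat \<alpha> i j) = Sw n + wcoef \<alpha> 1"
        unfolding R RB CB using n2 S1 by auto
      then show ?thesis using Sb[of n] n2 wb by simp
    next
      case False
      then have "2 \<le> i" "2 \<le> n+1-i" "n+1-i \<le> n" using n1 assms(4) by auto
      then show ?thesis unfolding R RB CB using Sb[of i] Sb[of "n+1-i"] n1 False by auto
    qed
  qed
  then show ?thesis by (simp add: n_def d_def)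
qed

lemma re_term:
  fixes y z :: complex
  shows "Re (y * cnj z) \<le> ((cmod z)^2 + (cmod y)^2) / 2"
proof -
  have "Re (y * cnj z) \<le> cmod (y * cnj z)" by (rule complex_Re_le_cmod)
  also have "\<dots> = cmod y * cmod z" by (simp add: norm_mult)
  also have "\<dots> \<le> ((cmod z)^2 + (cmod y)^2) / 2"
    using sum_squares_ge_zero[of "cmod y - cmod z" 0] by (simp add: power2_eq_square algebra_simps)
  finally show ?thesis .
qed

lemma re_diag: "Re (z * cnj z) = (cmod z)^2"
  using complex_norm_square[of z] by (metis Re_complex_of_real)

lemma quad_Re:
  fixes a :: "nat \<Rightarrow> nat \<Rightarrow> real" and x :: "nat \<Rightarrow> complex" and I :: "nat set"
  assumes fin: "finite I" and sym: "\<And>i j. a i j = a j i"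
    and off: "\<And>i j. i \<in> I \<Longrightarrow> j \<in> I \<Longrightarrow> i \<noteq> j \<Longrightarrow> a i j \<ge> 0"
    and row: "\<And>i. i \<in> I \<Longrightarrow> (\<Sum>j\<in>I. a i j) \<le> - c"
  shows "Re (\<Sum>i\<in>I. (\<Sum>j\<in>I. complex_of_real (a i j) * x j) * cnj (x i)) \<le> - c * (\<Sum>i\<in>I. (cmod (x i))^2)"
proof -
  have "Re (\<Sum>i\<in>I. (\<Sum>j\<in>I. complex_of_real (a i j) * x j) * cnj (x i))
      = (\<Sum>i\<in>I. \<Sum>j\<in>I. a i j * Re (x j * cnj (x i)))"
    by (simp add: Re_sum sum_distrib_right mult.assoc)
  also have "\<dots> \<le> (\<Sum>i\<in>I. \<Sum>j\<in>I. a i j * (((cmod (x i))^2 + (cmod (x j))^2) / 2))"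
  proof (intro sum_mono)
    fix i j assume ij: "i \<in> I" "j \<in> I"
    show "a i j * Re (x j * cnj (x i)) \<le> a i j * (((cmod (x i))^2 + (cmod (x j))^2) / 2)"
    proof (cases "i = j")
      case True then show ?thesis unfolding True re_diag by simp
    next
      case False then show ?thesis using off[OF ij False] re_term[of "x j" "x i"]
        by (intro mult_left_mono) auto
    qed
  qed
  also have "\<dots> = (\<Sum>i\<in>I. \<Sum>j\<in>I. a i j * (cmod (x i))^2) / 2 + (\<Sum>i\<in>I. \<Sum>j\<in>I. a i j * (cmod (x j))^2) / 2"
    by (simp add: sum_divide_distrib sum.distrib[symmetric] add_divide_distrib distrib_left)
  also have "(\<Sum>i\<in>I. \<Sum>j\<in>I. a i j * (cmod (x j))^2) = (\<Sum>i\<in>I. \<Sum>j\<in>I. a i j * (cmod (x i))^2)"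
    by (subst sum.swap) (simp add: sym)
  also have "(\<Sum>i\<in>I. \<Sum>j\<in>I. a i j * (cmod (x i))^2) = (\<Sum>i\<in>I. (\<Sum>j\<in>I. a i j) * (cmod (x i))^2)"
    by (simp add: sum_distrib_right)
  also have "\<dots> \<le> (\<Sum>i\<in>I. (- c) * (cmod (x i))^2)"
    using row by (intro sum_mono mult_right_mono) auto
  finally show ?thesis by (simp add: sum_distrib_left)
qed

lemma quad_Im:
  fixes a :: "nat \<Rightarrow> nat \<Rightarrow> real" and x :: "nat \<Rightarrow> complex" and I :: "nat set"
  assumes sym: "\<And>i j. a i j = a j i"
  shows "Im (\<Sum>i\<in>I. (\<Sum>j\<in>I. complex_of_real (a i j) * x j) * cnj (x i)) = 0"
proof -
  define S where "S = (\<Sum>i\<in>I. \<Sum>j\<in>I. a i j * Im (x j * cnj (x i)))"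
  have e: "Im (\<Sum>i\<in>I. (\<Sum>j\<in>I. complex_of_real (a i j) * x j) * cnj (x i)) = S"
    by (simp add: S_def Im_sum sum_distrib_right mult.assoc)
  have "S = (\<Sum>j\<in>I. \<Sum>i\<in>I. a i j * Im (x j * cnj (x i)))" unfolding S_def by (rule sum.swap)
  also have "\<dots> = (\<Sum>j\<in>I. \<Sum>i\<in>I. - (a j i * Im (x i * cnj (x j))))"
    by (intro sum.cong refl) (simp add: sym[of _ ] algebra_simps)
  also have "\<dots> = - S" by (simp add: S_def sum_negf)
  finally show ?thesis using e by simp
qed

lemma offdiag:
  assumes "1 < \<alpha>" "\<alpha> < 2" "i \<noteq> j"
  shows "Amat \<alpha> i j \<ge> 0"
proof -
  have key: "Amat \<alpha> i j \<ge> 0" if "i < j" for i j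
  proof (cases "j = i + 1")
    case True
    then show ?thesis using w02[OF assms(1,2)] by (simp add: Amat_def Bmat_def add.commute)
  next
    case False
    then have "Bmat \<alpha> i j = wcoef \<alpha> (j + 1 - i)" "Bmat \<alpha> j i = 0" "3 \<le> j + 1 - i"
      using that by (auto simp: Bmat_def)
    then show ?thesis using wcoef_nonneg[OF assms(1,2)] by (simp add: Amat_def)
  qed
  show ?thesis
  proof (cases "i < j")
    case True then show ?thesis by (rule key)
  next
    case False then have "j < i" using assms by auto
    from key[OF this] show ?thesis by (simp add: Amat_def add.commute)
  qed
qed

theorem lemma3p5:
  fixes \<alpha> b h :: real and M :: nat and u :: "nat \<Rightarrow> complex"
  assumes "1 < \<alpha>" "\<alpha> < 2" "b > 0" "M \<ge> 2" "h = b / real M"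
  shows "Im (ip_h h M (matvec M (Amat \<alpha>) u) u) = 0
       \<and> - (1 / h powr \<alpha>) * Re (ip_h h M (matvec M (Amat \<alpha>) u) u)
           \<ge> - (2 / (b powr \<alpha> * Gamma (1 - \<alpha>))) * (norm_h h M u)\<^sup>2
       \<and> ((\<exists>i\<in>{1..M-1}. u i \<noteq> 0) \<longrightarrow>
           - (2 / (b powr \<alpha> * Gamma (1 - \<alpha>))) * (norm_h h M u)\<^sup>2 > 0)"
proof -
  define I where "I = {1..M-1}"
  define d where "d = (- 1 / Gamma (1 - \<alpha>)) * real M powr (-\<alpha>)"
  define K where "K = - (2 / (b powr \<alpha> * Gamma (1 - \<alpha>)))"
  define Q where "Q = (\<Sum>i\<in>I. (\<Sum>j\<in>I. complex_of_real (Amat \<alpha> i j) * u j) * cnj (u i))"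
  define S where "S = (\<Sum>i\<in>I. (cmod (u i))^2)"
  have Gn: "Gamma (1 - \<alpha>) < 0" using Gamma_neg[OF assms(1,2)] .
  have M0: "real M > 0" using assms by auto
  have h0: "h > 0" using assms M0 by simp
  have ip: "ip_h h M (matvec M (Amat \<alpha>) u) u = complex_of_real h * Q"
    by (simp add: ip_h_def matvec_def Q_def I_def)
  have sym: "\<And>i j. Amat \<alpha> i j = Amat \<alpha> j i" by (simp add: Amat_def add.commute)
  have ImQ: "Im Q = 0" unfolding Q_def by (rule quad_Im) (rule sym)
  have ReQ: "Re Q \<le> - (2 * d) * S" unfolding Q_def S_def
  proof (rule quad_Re)
    show "finite I" by (simp add: I_def)
  next
    fix i j assume "i \<in> I" "j \<in> I" "i \<noteq> j"
    then show "0 \<le> Amat \<alpha> i j" using offdiag[OF assms(1,2)] by blast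
  next
    fix i assume "i \<in> I"
    then show "(\<Sum>j\<in>I. Amat \<alpha> i j) \<le> - (2 * d)"
      using rowA[OF assms(1,2,4), of i] by (simp add: I_def d_def)
  qed (rule sym)
  have S0: "S \<ge> 0" by (simp add: S_def sum_nonneg)
  have nrm: "(norm_h h M u)\<^sup>2 = h * S"
  proof -
    have "(\<Sum>i\<in>I. u i * cnj (u i)) = complex_of_real S"
      unfolding S_def of_real_sum by (intro sum.cong refl) (simp add: complex_norm_square[symmetric])
    then have "Re (ip_h h M u u) = h * S"
      by (simp add: ip_h_def I_def)
    then show ?thesis using h0 S0 by (simp add: norm_h_def)
  qed
  have hp: "h powr \<alpha> = b powr \<alpha> / real M powr \<alpha>"
    using assms M0 by (simp add: powr_divide)
  have Kh: "K * h powr \<alpha> = 2 * d"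
    using M0 assms(3) by (simp add: K_def d_def hp powr_minus_divide)
  have hpa: "h powr \<alpha> > 0" using h0 by simp
  have part2: "- (1 / h powr \<alpha>) * Re (complex_of_real h * Q) \<ge> K * (h * S)"
  proof -
    have "Re (complex_of_real h * Q) = h * Re Q" by simp
    also have "\<dots> \<le> h * (- (2 * d) * S)" using ReQ h0 by (intro mult_left_mono) auto
    finally have r: "Re (complex_of_real h * Q) \<le> - (K * h powr \<alpha>) * (h * S)" by (simp add: Kh algebra_simps)
    have "- (1 / h powr \<alpha>) * Re (complex_of_real h * Q) \<ge> - (1 / h powr \<alpha>) * (- (K * h powr \<alpha>) * (h * S))"
      using r hpa by (intro mult_left_mono_neg) auto
    then show ?thesis using hpa by simp
  qed
  have Kpos: "K > 0" using Gn assms(3) by (simp add: K_def divide_neg_pos mult_pos_neg)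
  have part3: "K * (h * S) > 0" if "\<exists>i\<in>{1..M-1}. u i \<noteq> 0"
  proof -
    from that obtain i where i: "i \<in> I" "u i \<noteq> 0" by (auto simp: I_def)
    have "0 < (cmod (u i))^2" using i by simp
    also have "\<dots> \<le> S" unfolding S_def using i by (intro member_le_sum) (auto simp: I_def)
    finally show ?thesis using Kpos h0 by simp
  qed
  show ?thesis
    unfolding ip nrm K_def[symmetric]
    using ImQ part2 part3 by simp
qed

end
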